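(* Let $(l_n)_{n\ge 1}$, $(r_n)_{n\ge 1}$ be real numbers with $l_n,r_n>0$ and $l_n+r_n=1$, let $k\ge 1$ be an integer, and let $(X_m)_{m\ge 0}$ be the birth-death chain with these probabilities and $X_0=k$; let $T_\Delta$ be its first hitting time of $0$ ($T_\Delta=\infty$ if $0$ is never hit). Suppose that $$\sum_{n=1}^{\infty}\Big|1-\frac{l_n}{r_n}\Big|<\infty.$$ Then for every non-decreasing sequence of stopping times $(T_m)_{m\ge1}$ with $E[T_m]<\infty$ for all $m$ and $T_m\to T_\Delta$ almost surely, the limit $\lim_{m\to\infty}E[X_{T_m}]$ exists and lies in $(0,\infty)$.
   Context: The birth-death chain: $(X_m)$ is a Markov chain on the nonnegative integers which from a state $n\ge 1$ moves to $n+1$ with probability $r_n$ and to $n-1$ with probability $l_n$, and for which $0$ is absorbing. Stopping times are with respect to the natural filtration of $(X_m)$. *)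

theory Defs
  imports "HOL-Probability.Probability"
begin

definition bd_trans :: "(nat \<Rightarrow> real) \<Rightarrow> (nat \<Rightarrow> real) \<Rightarrow> nat \<Rightarrow> nat \<Rightarrow> real" where
  "bd_trans l r x y =
     (if x = 0 then (if y = 0 then 1 else 0)
      else if y = Suc x then r x
      else if Suc y = x then l x
      else 0)"

text \<open>X is (in law) the birth-death chain with probabilities l, r started at k:
  X 0 = k almost surely, and for every history x_0..x_m the conditional probability
  of X_(m+1) = y is bd_trans l r x_m y (Markov property with these transitions).\<close>
definition birth_death_chain ::
  "'a measure \<Rightarrow> (nat \<Rightarrow> real) \<Rightarrow> (nat \<Rightarrow> real) \<Rightarrow> nat \<Rightarrow> (nat \<Rightarrow> 'a \<Rightarrow> nat) \<Rightarrow> bool" where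
  "birth_death_chain M l r k X \<longleftrightarrow>
     prob_space M \<and>
     (\<forall>n. X n \<in> M \<rightarrow>\<^sub>M count_space UNIV) \<and>
     measure M {\<omega> \<in> space M. X 0 \<omega> = k} = 1 \<and>
     (\<forall>xs y. xs \<noteq> [] \<longrightarrow>
        measure M {\<omega> \<in> space M. (\<forall>i<length xs. X i \<omega> = xs ! i) \<and> X (length xs) \<omega> = y}
        = measure M {\<omega> \<in> space M. \<forall>i<length xs. X i \<omega> = xs ! i} * bd_trans l r (last xs) y)"

definition nat_filtration :: "'a measure \<Rightarrow> (nat \<Rightarrow> 'a \<Rightarrow> nat) \<Rightarrow> nat \<Rightarrow> 'a set set" where
  "nat_filtration M X n = sigma_sets (space M) {X i -` A \<inter> space M | i A. i \<le> n}"

definition is_stopping_time :: "'a measure \<Rightarrow> (nat \<Rightarrow> 'a \<Rightarrow> nat) \<Rightarrow> ('a \<Rightarrow> enat) \<Rightarrow> bool" where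
  "is_stopping_time M X T \<longleftrightarrow> (\<forall>n. {\<omega> \<in> space M. T \<omega> \<le> enat n} \<in> nat_filtration M X n)"

definition hitting_time_0 :: "(nat \<Rightarrow> 'a \<Rightarrow> nat) \<Rightarrow> 'a \<Rightarrow> enat" where
  "hitting_time_0 X \<omega> = (if \<exists>n. X n \<omega> = 0 then enat (LEAST n. X n \<omega> = 0) else \<infinity>)"

text \<open>Value of the process at a stopping time (arbitrary value 0 where T is infinite;
  this only happens on a null set in the theorem).\<close>
definition stopped_value :: "(nat \<Rightarrow> 'a \<Rightarrow> nat) \<Rightarrow> ('a \<Rightarrow> enat) \<Rightarrow> 'a \<Rightarrow> nat" where
  "stopped_value X T \<omega> = (case T \<omega> of enat n \<Rightarrow> X n \<omega> | \<infinity> \<Rightarrow> 0)"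

end

theory Submission
  imports Defs
begin

locale bdc =
  fixes M :: "'a measure" and l r :: "nat \<Rightarrow> real" and k :: nat and X :: "nat \<Rightarrow> 'a \<Rightarrow> nat"
  assumes lpos: "\<And>n. n \<ge> 1 \<Longrightarrow> l n > 0"
    and rpos: "\<And>n. n \<ge> 1 \<Longrightarrow> r n > 0"
    and lr: "\<And>n. n \<ge> 1 \<Longrightarrow> l n + r n = 1"
    and k: "k \<ge> 1"
    and chain: "birth_death_chain M l r k X"
    and summ: "summable (\<lambda>n. \<bar>1 - l (Suc n) / r (Suc n)\<bar>)"
begin

lemma PS: "prob_space M" using chain by (simp add: birth_death_chain_def)
sublocale prob_space M by (rule PS)

lemma Xmeas[measurable]: "X n \<in> M \<rightarrow>\<^sub>M count_space UNIV"
  using chain by (simp add: birth_death_chain_def)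

lemma cyl_eq: "xs \<noteq> [] \<Longrightarrow> measure M {\<omega> \<in> space M. (\<forall>i<length xs. X i \<omega> = xs ! i) \<and> X (length xs) \<omega> = y}
        = measure M {\<omega> \<in> space M. \<forall>i<length xs. X i \<omega> = xs ! i} * bd_trans l r (last xs) y"
  using chain by (simp add: birth_death_chain_def)

lemma X0: "measure M {\<omega> \<in> space M. X 0 \<omega> = k} = 1"
  using chain by (simp add: birth_death_chain_def)

lemma trans_nonneg: "bd_trans l r x y \<ge> 0"
  using lpos[of x] rpos[of x] by (auto simp: bd_trans_def)

definition V :: "nat \<Rightarrow> 'a \<Rightarrow> nat list" where "V j \<omega> = map (\<lambda>i. X i \<omega>) [0..<Suc j]"

lemma filt_char: "A \<in> nat_filtration M X j \<Longrightarrow> \<exists>B. A = {\<omega> \<in> space M. V j \<omega> \<in> B}"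
  unfolding nat_filtration_def
proof (induction rule: sigma_sets.induct)
  case (Basic a)
  then obtain i C where a: "a = X i -` C \<inter> space M" "i \<le> j" by auto
  have "\<And>\<omega>. V j \<omega> ! i = X i \<omega>" using a(2) unfolding V_def
    by (subst nth_map) (auto simp del: upt_Suc)
  then show ?case
    by (intro exI[of _ "{xs. xs ! i \<in> C}"]) (auto simp: a)
next
  case Empty
  then show ?case by (intro exI[of _ "{}"]) auto
next
  case (Compl a)
  then obtain B where "a = {\<omega> \<in> space M. V j \<omega> \<in> B}" by auto
  then show ?case by (intro exI[of _ "- B"]) auto
next
  case (Union a)
  then obtain B where "\<And>i. a i = {\<omega> \<in> space M. V j \<omega> \<in> B i}" by metis
  then show ?case by (intro exI[of _ "\<Union>(range B)"]) auto
qed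

lemma filt_sets: "nat_filtration M X j \<subseteq> sets M"
  unfolding nat_filtration_def
  by (rule sets.sigma_sets_subset) (auto intro: measurable_sets[OF Xmeas])

lemma filt_in: "A \<in> nat_filtration M X j \<Longrightarrow> A \<in> sets M"
  using filt_sets by auto

lemma filt_gen: "i \<le> j \<Longrightarrow> X i -` C \<inter> space M \<in> nat_filtration M X j"
  unfolding nat_filtration_def by (rule sigma_sets.Basic) auto

lemma filt_space: "space M \<in> nat_filtration M X j"
proof -
  have "space M - {} \<in> nat_filtration M X j" unfolding nat_filtration_def
    by (rule sigma_sets.Compl) (rule sigma_sets.Empty)
  then show ?thesis by simp
qed

lemma filt_compl: "A \<in> nat_filtration M X j \<Longrightarrow> space M - A \<in> nat_filtration M X j"
  unfolding nat_filtration_def by (rule sigma_sets.Compl)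

lemma markov:
  assumes "A \<in> nat_filtration M X j"
  shows "measure M (A \<inter> {\<omega>\<in>space M. X j \<omega> = x \<and> X (Suc j) \<omega> = y})
       = measure M (A \<inter> {\<omega>\<in>space M. X j \<omega> = x}) * bd_trans l r x y"
proof -
  obtain B where A: "A = {\<omega> \<in> space M. V j \<omega> \<in> B}" using filt_char[OF assms] by blast
  define B' where "B' = {xs \<in> B. length xs = Suc j \<and> last xs = x}"
  define C where "C xs = {\<omega> \<in> space M. \<forall>i<length xs. X i \<omega> = xs ! i}" for xs
  define E where "E xs = {\<omega> \<in> space M. (\<forall>i<length xs. X i \<omega> = xs ! i) \<and> X (length xs) \<omega> = y}" for xs
  have VC: "V j \<omega> = xs \<longleftrightarrow> (\<forall>i<length xs. X i \<omega> = xs ! i)" if "length xs = Suc j" for \<omega> xs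
    using that unfolding V_def by (auto simp: list_eq_iff_nth_eq simp del: upt_Suc)
  have lastV: "last (V j \<omega>) = X j \<omega>" for \<omega>
    unfolding V_def by simp
  have lenV: "length (V j \<omega>) = Suc j" for \<omega> unfolding V_def by simp
  have 1: "A \<inter> {\<omega>\<in>space M. X j \<omega> = x \<and> X (Suc j) \<omega> = y} = (\<Union>xs\<in>B'. E xs)"
  proof (rule set_eqI, rule iffI)
    fix \<omega> assume w: "\<omega> \<in> A \<inter> {\<omega>\<in>space M. X j \<omega> = x \<and> X (Suc j) \<omega> = y}"
    then show "\<omega> \<in> (\<Union>xs\<in>B'. E xs)"
      using VC[of "V j \<omega>" \<omega>] lastV[of \<omega>] lenV[of \<omega>]
      by (intro UN_I[of "V j \<omega>"]) (auto simp: A B'_def E_def)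
  next
    fix \<omega> assume "\<omega> \<in> (\<Union>xs\<in>B'. E xs)"
    then obtain xs where xs: "xs \<in> B'" "\<omega> \<in> E xs" by auto
    then have "V j \<omega> = xs" using VC[of xs \<omega>] by (auto simp: B'_def E_def)
    then show "\<omega> \<in> A \<inter> {\<omega>\<in>space M. X j \<omega> = x \<and> X (Suc j) \<omega> = y}"
      using xs lastV[of \<omega>]
      by (auto simp: A B'_def E_def)
  qed
  have 2: "A \<inter> {\<omega>\<in>space M. X j \<omega> = x} = (\<Union>xs\<in>B'. C xs)"
  proof (rule set_eqI, rule iffI)
    fix \<omega> assume "\<omega> \<in> A \<inter> {\<omega>\<in>space M. X j \<omega> = x}"
    then show "\<omega> \<in> (\<Union>xs\<in>B'. C xs)"
      using VC[of "V j \<omega>" \<omega>] lastV[of \<omega>] lenV[of \<omega>]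
      by (intro UN_I[of "V j \<omega>"]) (auto simp: A B'_def C_def)
  next
    fix \<omega> assume "\<omega> \<in> (\<Union>xs\<in>B'. C xs)"
    then obtain xs where xs: "xs \<in> B'" "\<omega> \<in> C xs" by auto
    then have "V j \<omega> = xs" using VC[of xs \<omega>] by (auto simp: B'_def C_def)
    then show "\<omega> \<in> A \<inter> {\<omega>\<in>space M. X j \<omega> = x}"
      using xs lastV[of \<omega>]
      by (auto simp: A B'_def C_def)
  qed
  have cB: "countable B'" by (rule countable_subset[OF _ countableI_type[where 'a="nat list"]]) auto
  have sE: "E xs \<in> sets M" for xs unfolding E_def by measurable
  have sC: "C xs \<in> sets M" for xs unfolding C_def by measurable
  have dE: "disjoint_family_on E B'"
    unfolding disjoint_family_on_def
  proof (intro ballI impI)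
    fix xs ys assume "xs \<in> B'" "ys \<in> B'" "xs \<noteq> ys"
    have False if "\<omega> \<in> E xs" "\<omega> \<in> E ys" for \<omega>
    proof -
      have "V j \<omega> = xs" "V j \<omega> = ys"
        using that \<open>xs \<in> B'\<close> \<open>ys \<in> B'\<close> VC[of xs \<omega>] VC[of ys \<omega>] by (auto simp: B'_def E_def)
      then show False using \<open>xs \<noteq> ys\<close> by simp
    qed
    then show "E xs \<inter> E ys = {}" by blast
  qed
  have dC: "disjoint_family_on C B'"
    unfolding disjoint_family_on_def
  proof (intro ballI impI)
    fix xs ys assume "xs \<in> B'" "ys \<in> B'" "xs \<noteq> ys"
    have False if "\<omega> \<in> C xs" "\<omega> \<in> C ys" for \<omega>
    proof -
      have "V j \<omega> = xs" "V j \<omega> = ys"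
        using that \<open>xs \<in> B'\<close> \<open>ys \<in> B'\<close> VC[of xs \<omega>] VC[of ys \<omega>] by (auto simp: B'_def C_def)
      then show False using \<open>xs \<noteq> ys\<close> by simp
    qed
    then show "C xs \<inter> C ys = {}" by blast
  qed
  have "emeasure M (\<Union>xs\<in>B'. E xs) = (\<integral>\<^sup>+xs. emeasure M (E xs) \<partial>count_space B')"
    by (rule emeasure_UN_countable[OF sE cB dE])
  also have "\<dots> = (\<integral>\<^sup>+xs. emeasure M (C xs) * ennreal (bd_trans l r x y) \<partial>count_space B')"
  proof (rule nn_integral_cong)
    fix xs assume "xs \<in> space (count_space B')"
    then have xs: "xs \<noteq> []" "last xs = x" by (auto simp: B'_def)
    show "emeasure M (E xs) = emeasure M (C xs) * ennreal (bd_trans l r x y)"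
      using cyl_eq[OF xs(1), of y] xs(2)
      by (simp add: emeasure_eq_measure E_def C_def ennreal_mult[symmetric] trans_nonneg)
  qed
  also have "\<dots> = (\<integral>\<^sup>+xs. emeasure M (C xs) \<partial>count_space B') * ennreal (bd_trans l r x y)"
    by (rule nn_integral_multc) simp
  also have "\<dots> = emeasure M (\<Union>xs\<in>B'. C xs) * ennreal (bd_trans l r x y)"
    by (simp add: emeasure_UN_countable[OF sC cB dC])
  finally have "emeasure M (\<Union>xs\<in>B'. E xs) = emeasure M (\<Union>xs\<in>B'. C xs) * ennreal (bd_trans l r x y)" .
  then show ?thesis unfolding 1 2 emeasure_eq_measure
    by (simp add: ennreal_mult[symmetric] trans_nonneg)
qed

lemma step_null:
  assumes "bd_trans l r x y = 0"
  shows "AE \<omega> in M. \<not> (X j \<omega> = x \<and> X (Suc j) \<omega> = y)"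
proof (rule AE_I')
  have "measure M (space M \<inter> {\<omega>\<in>space M. X j \<omega> = x \<and> X (Suc j) \<omega> = y}) = 0"
    using markov[OF filt_space, of j x y] assms by simp
  then show "{\<omega>\<in>space M. X j \<omega> = x \<and> X (Suc j) \<omega> = y} \<in> null_sets M"
    by (intro null_setsI) (auto simp: emeasure_eq_measure)
qed auto

definition good :: "'a \<Rightarrow> bool" where
  "good \<omega> \<longleftrightarrow> X 0 \<omega> = k \<and> (\<forall>j. bd_trans l r (X j \<omega>) (X (Suc j) \<omega>) \<noteq> 0)"

lemma AE_good: "AE \<omega> in M. good \<omega>"
proof -
  have "AE \<omega> in M. \<omega> \<in> {\<omega>\<in>space M. X 0 \<omega> = k}"
    using X0 by (subst prob_eq_1[symmetric]) auto
  then have 1: "AE \<omega> in M. X 0 \<omega> = k" by auto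
  have 2: "AE \<omega> in M. \<forall>j x y. X j \<omega> = x \<and> X (Suc j) \<omega> = y \<longrightarrow> bd_trans l r x y \<noteq> 0"
  proof (subst AE_all_countable, intro allI, subst AE_all_countable, intro allI,
         subst AE_all_countable, intro allI)
    fix j x y
    show "AE \<omega> in M. X j \<omega> = x \<and> X (Suc j) \<omega> = y \<longrightarrow> bd_trans l r x y \<noteq> 0"
    proof (cases "bd_trans l r x y = 0")
      case True
      then show ?thesis using step_null[OF True, of j] by eventually_elim auto
    qed auto
  qed
  show ?thesis using 1 2 by eventually_elim (auto simp: good_def)
qed

lemma good_step:
  assumes "good \<omega>"
  shows "X j \<omega> = 0 \<Longrightarrow> X (Suc j) \<omega> = 0"
    and "X j \<omega> \<noteq> 0 \<Longrightarrow> X (Suc j) \<omega> = Suc (X j \<omega>) \<or> Suc (X (Suc j) \<omega>) = X j \<omega>"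
  using assms unfolding good_def bd_trans_def by (auto split: if_splits)

lemma good_X0: "good \<omega> \<Longrightarrow> X 0 \<omega> = k" by (simp add: good_def)

lemma good_bound: "good \<omega> \<Longrightarrow> X j \<omega> \<le> k + j"
proof (induction j)
  case 0 then show ?case by (simp add: good_X0)
next
  case (Suc j)
  then show ?case using good_step[OF Suc.prems, of j] by (cases "X j \<omega> = 0") auto
qed

lemma good_absorb: "good \<omega> \<Longrightarrow> X i \<omega> = 0 \<Longrightarrow> i \<le> j \<Longrightarrow> X j \<omega> = 0"
proof (induction j)
  case 0 then show ?case by simp
next
  case (Suc j)
  then show ?case using good_step(1)[OF Suc.prems(1), of j] by (cases "i = Suc j") auto
qed

lemma good_diff: "good \<omega> \<Longrightarrow> X (Suc j) \<omega> \<le> Suc (X j \<omega>) \<and> X j \<omega> \<le> Suc (X (Suc j) \<omega>)"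
  using good_step[of \<omega> j] by (cases "X j \<omega> = 0") auto

lemma int_ci: "S \<in> sets M \<Longrightarrow> integrable M (\<lambda>\<omega>. c * indicator S \<omega> :: real)"
  by (intro integrable_mult_right integrable_real_indicator) (auto simp: less_top[symmetric])

lemma int_ci_eq: "S \<in> sets M \<Longrightarrow> (\<integral>\<omega>. c * indicator S \<omega> \<partial>M) = c * measure M S"
  by simp

definition Pf :: "(nat \<Rightarrow> real) \<Rightarrow> nat \<Rightarrow> real" where
  "Pf \<phi> x = (if x = 0 then \<phi> 0 else r x * \<phi> (Suc x) + l x * \<phi> (x - 1))"

lemma trans_sum:
  assumes "Suc x \<le> N"
  shows "(\<Sum>y\<le>N. \<phi> y * bd_trans l r x y) = Pf \<phi> x"
proof (cases "x = 0")
  case True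
  have "(\<Sum>y\<le>N. \<phi> y * bd_trans l r x y) = (\<Sum>y\<le>N. if y = 0 then \<phi> y else 0)"
    by (intro sum.cong) (auto simp: bd_trans_def True)
  then show ?thesis by (simp add: Pf_def True)
next
  case False
  have "(\<Sum>y\<le>N. \<phi> y * bd_trans l r x y) =
        (\<Sum>y\<le>N. (if y = Suc x then \<phi> y * r x else 0) + (if y = x - 1 then \<phi> y * l x else 0))"
    apply (intro sum.cong refl) using False by (auto simp: bd_trans_def)
  also have "\<dots> = r x * \<phi> (Suc x) + l x * \<phi> (x - 1)"
    using assms by (simp add: sum.distrib)
  finally show ?thesis by (simp add: Pf_def False)
qed

lemma drift:
  assumes A: "A \<in> nat_filtration M X j"
  shows "(\<integral>\<omega>. indicator A \<omega> * \<phi> (X (Suc j) \<omega>) \<partial>M) = (\<integral>\<omega>. indicator A \<omega> * Pf \<phi> (X j \<omega>) \<partial>M)"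
proof -
  have As[measurable]: "A \<in> sets M" using filt_in[OF A] .
  define N where "N = k + j"
  define S where "S x y = A \<inter> {\<omega>\<in>space M. X j \<omega> = x \<and> X (Suc j) \<omega> = y}" for x y
  define R where "R x = A \<inter> {\<omega>\<in>space M. X j \<omega> = x}" for x
  have Ss[measurable]: "S x y \<in> sets M" for x y unfolding S_def by measurable
  have Rs[measurable]: "R x \<in> sets M" for x unfolding R_def by measurable
  have "(\<integral>\<omega>. indicator A \<omega> * \<phi> (X (Suc j) \<omega>) \<partial>M) =
        (\<integral>\<omega>. (\<Sum>x\<le>N. \<Sum>y\<le>Suc N. \<phi> y * indicator (S x y) \<omega>) \<partial>M)"
  proof (rule integral_cong_AE)
    show "AE \<omega> in M. indicator A \<omega> * \<phi> (X (Suc j) \<omega>) = (\<Sum>x\<le>N. \<Sum>y\<le>Suc N. \<phi> y * indicator (S x y) \<omega>)"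
      using AE_space AE_good
    proof eventually_elim
      case (elim \<omega>)
      have b1: "X j \<omega> \<le> N" "X (Suc j) \<omega> \<le> Suc N" using good_bound[OF elim(2), of j] good_bound[OF elim(2), of "Suc j"] by (auto simp: N_def)
      have "(\<Sum>x\<le>N. \<Sum>y\<le>Suc N. \<phi> y * indicator (S x y) \<omega>) =
            (\<Sum>x\<le>N. if x = X j \<omega> then (\<Sum>y\<le>Suc N. if y = X (Suc j) \<omega> then \<phi> y * indicator A \<omega> else 0) else 0)"
        by (intro sum.cong refl) (auto simp: S_def indicator_def elim(1))
      also have "\<dots> = indicator A \<omega> * \<phi> (X (Suc j) \<omega>)" using b1 by simp
      finally show ?case by simp
    qed
  qed measurable
  also have "\<dots> = (\<Sum>x\<le>N. \<Sum>y\<le>Suc N. \<phi> y * measure M (S x y))"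
    by (simp only: Bochner_Integration.integral_sum Bochner_Integration.integrable_sum int_ci Ss int_ci_eq)
  also have "\<dots> = (\<Sum>x\<le>N. measure M (R x) * (\<Sum>y\<le>Suc N. \<phi> y * bd_trans l r x y))"
    by (intro sum.cong refl) (simp add: sum_distrib_left sum_distrib_right S_def R_def markov[OF A] mult_ac del: sum.atMost_Suc)
  also have "\<dots> = (\<Sum>x\<le>N. Pf \<phi> x * measure M (R x))"
    by (intro sum.cong refl) (simp add: trans_sum del: sum.atMost_Suc)
  also have "\<dots> = (\<integral>\<omega>. (\<Sum>x\<le>N. Pf \<phi> x * indicator (R x) \<omega>) \<partial>M)"
    by (simp only: Bochner_Integration.integral_sum Bochner_Integration.integrable_sum int_ci Rs int_ci_eq)
  also have "\<dots> = (\<integral>\<omega>. indicator A \<omega> * Pf \<phi> (X j \<omega>) \<partial>M)"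
  proof (rule integral_cong_AE)
    show "AE \<omega> in M. (\<Sum>x\<le>N. Pf \<phi> x * indicator (R x) \<omega>) = indicator A \<omega> * Pf \<phi> (X j \<omega>)"
      using AE_space AE_good
    proof eventually_elim
      case (elim \<omega>)
      have b1: "X j \<omega> \<le> N" using good_bound[OF elim(2)] by (auto simp: N_def)
      have "(\<Sum>x\<le>N. Pf \<phi> x * indicator (R x) \<omega>) =
            (\<Sum>x\<le>N. if x = X j \<omega> then Pf \<phi> x * indicator A \<omega> else 0)"
        by (intro sum.cong refl) (auto simp: R_def indicator_def elim(1))
      also have "\<dots> = indicator A \<omega> * Pf \<phi> (X j \<omega>)" using b1 by simp
      finally show ?case .
    qed
  qed measurable
  finally show ?thesis .
qed

lemma int_X:
  fixes h :: "'a \<Rightarrow> nat"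
  assumes h: "h \<in> M \<rightarrow>\<^sub>M count_space UNIV" and b: "AE \<omega> in M. h \<omega> \<le> K"
  shows "integrable M (\<lambda>\<omega>. \<phi> (h \<omega>) :: real)"
proof (rule integrable_const_bound[where B="\<Sum>x\<le>K. \<bar>\<phi> x\<bar>"])
  show "AE \<omega> in M. norm (\<phi> (h \<omega>)) \<le> (\<Sum>x\<le>K. \<bar>\<phi> x\<bar>)"
    using b
  proof eventually_elim
    case (elim \<omega>)
    have "\<bar>\<phi> (h \<omega>)\<bar> \<le> (\<Sum>x\<in>{..K}. \<bar>\<phi> x\<bar>)"
      by (rule member_le_sum[where f="\<lambda>x. \<bar>\<phi> x\<bar>"]) (use elim in auto)
    then show ?case by simp
  qed
  show "(\<lambda>\<omega>. \<phi> (h \<omega>)) \<in> borel_measurable M"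
    using measurable_compose[OF h, of \<phi>] by simp
qed

lemma stopX_meas:
  assumes "\<tau> \<in> M \<rightarrow>\<^sub>M count_space UNIV"
  shows "(\<lambda>\<omega>. X (\<tau> \<omega>) \<omega>) \<in> M \<rightarrow>\<^sub>M count_space UNIV"
  by (rule measurable_compose_countable'[where I=UNIV]) (use assms in auto)

definition ti :: "('a \<Rightarrow> enat) \<Rightarrow> nat \<Rightarrow> 'a \<Rightarrow> nat" where
  "ti \<tau> n \<omega> = the_enat (min (\<tau> \<omega>) (enat n))"

lemma ti_less: "enat n < \<tau> \<omega> \<Longrightarrow> ti \<tau> n \<omega> = n"
  by (auto simp: ti_def min_def)

lemma ti_ge: "\<tau> \<omega> = enat t \<Longrightarrow> t \<le> n \<Longrightarrow> ti \<tau> n \<omega> = t"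
  by (simp add: ti_def min_def)

lemma ti_le: "ti \<tau> n \<omega> \<le> n"
  by (cases "\<tau> \<omega>") (auto simp: ti_def min_def)

lemma ti_0: "ti \<tau> 0 \<omega> = 0"
  using ti_le[of \<tau> 0 \<omega>] by simp

lemma min_meas:
  assumes "\<tau> \<in> M \<rightarrow>\<^sub>M count_space UNIV"
  shows "ti \<tau> n \<in> M \<rightarrow>\<^sub>M count_space (UNIV::nat set)"
  using measurable_compose[OF assms, of "\<lambda>t. the_enat (min t (enat n))" "count_space UNIV"]
  by (simp add: ti_def[abs_def])

lemma ost_step:
  assumes tm: "\<tau> \<in> M \<rightarrow>\<^sub>M count_space UNIV"
    and tf: "{\<omega>\<in>space M. enat n < \<tau> \<omega>} \<in> nat_filtration M X n"
  shows "(\<integral>\<omega>. \<phi> (X (ti \<tau> (Suc n) \<omega>) \<omega>) \<partial>M) =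
         (\<integral>\<omega>. \<phi> (X (ti \<tau> n \<omega>) \<omega>) \<partial>M) +
         (\<integral>\<omega>. indicator {\<omega>\<in>space M. enat n < \<tau> \<omega>} \<omega> * (Pf \<phi> (X n \<omega>) - \<phi> (X n \<omega>)) \<partial>M)"
proof -
  define A where "A = {\<omega>\<in>space M. enat n < \<tau> \<omega>}"
  have As: "A \<in> sets M" using filt_in[OF tf] by (simp add: A_def)
  have m1: "(\<lambda>\<omega>. X (ti \<tau> m \<omega>) \<omega>) \<in> M \<rightarrow>\<^sub>M count_space UNIV" for m
    by (rule stopX_meas[OF min_meas[OF tm]])
  have b1: "AE \<omega> in M. X (ti \<tau> m \<omega>) \<omega> \<le> k + m" for m
    using AE_good by eventually_elim (meson add_left_mono good_bound order_trans ti_le)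
  have i1: "integrable M (\<lambda>\<omega>. \<psi> (X (ti \<tau> m \<omega>) \<omega>))" for m and \<psi> :: "nat \<Rightarrow> real"
    by (rule int_X[OF m1 b1])
  have bn: "AE \<omega> in M. X m \<omega> \<le> k + m" for m
    using AE_good by eventually_elim (rule good_bound)
  note bsn = bn[of "Suc n"]
  note bn = bn[of n]
  have i2: "integrable M (\<lambda>\<omega>. indicator A \<omega> * \<psi> (X m \<omega>))" if "AE \<omega> in M. X m \<omega> \<le> K" for m K and \<psi> :: "nat \<Rightarrow> real"
    using integrable_real_mult_indicator[OF As int_X[OF Xmeas that, of \<psi>]] by (simp add: mult.commute)
  have pw: "\<phi> (X (ti \<tau> (Suc n) \<omega>) \<omega>) = \<phi> (X (ti \<tau> n \<omega>) \<omega>) +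
      (indicator A \<omega> * \<phi> (X (Suc n) \<omega>) - indicator A \<omega> * \<phi> (X n \<omega>))" if "\<omega> \<in> space M" for \<omega>
  proof (cases "enat n < \<tau> \<omega>")
    case True
    then have "enat (Suc n) \<le> \<tau> \<omega>" by (simp add: Suc_ile_eq)
    then have "ti \<tau> (Suc n) \<omega> = Suc n" by (simp add: ti_def min_def)
    then show ?thesis using True that ti_less[of n \<tau> \<omega>, OF True] by (simp add: A_def indicator_def)
  next
    case False
    then obtain t where t: "\<tau> \<omega> = enat t" "t \<le> n" by (cases "\<tau> \<omega>") auto
    then have "ti \<tau> (Suc n) \<omega> = t" "ti \<tau> n \<omega> = t" by (auto intro: ti_ge)
    then show ?thesis using False that by (simp add: A_def indicator_def)
  qed
  have "(\<integral>\<omega>. \<phi> (X (ti \<tau> (Suc n) \<omega>) \<omega>) \<partial>M) =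
     (\<integral>\<omega>. \<phi> (X (ti \<tau> n \<omega>) \<omega>) + (indicator A \<omega> * \<phi> (X (Suc n) \<omega>) - indicator A \<omega> * \<phi> (X n \<omega>)) \<partial>M)"
    by (rule Bochner_Integration.integral_cong[OF refl pw])
  also have "\<dots> = (\<integral>\<omega>. \<phi> (X (ti \<tau> n \<omega>) \<omega>) \<partial>M) +
      ((\<integral>\<omega>. indicator A \<omega> * \<phi> (X (Suc n) \<omega>) \<partial>M) - (\<integral>\<omega>. indicator A \<omega> * \<phi> (X n \<omega>) \<partial>M))"
    using i1 i2[OF bn] i2[OF bsn] by simp
  also have "(\<integral>\<omega>. indicator A \<omega> * \<phi> (X (Suc n) \<omega>) \<partial>M) = (\<integral>\<omega>. indicator A \<omega> * Pf \<phi> (X n \<omega>) \<partial>M)"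
    using drift[OF tf] by (simp add: A_def)
  also have "(\<integral>\<omega>. indicator A \<omega> * Pf \<phi> (X n \<omega>) \<partial>M) - (\<integral>\<omega>. indicator A \<omega> * \<phi> (X n \<omega>) \<partial>M)
      = (\<integral>\<omega>. indicator A \<omega> * (Pf \<phi> (X n \<omega>) - \<phi> (X n \<omega>)) \<partial>M)"
    using i2[OF bn] by (simp add: right_diff_distrib)
  finally show ?thesis by (simp add: A_def)
qed

lemma ost_iter:
  assumes tm: "\<tau> \<in> M \<rightarrow>\<^sub>M count_space UNIV"
    and tf: "\<And>n. {\<omega>\<in>space M. enat n < \<tau> \<omega>} \<in> nat_filtration M X n"
  shows "(\<integral>\<omega>. \<phi> (X (ti \<tau> n \<omega>) \<omega>) \<partial>M) = \<phi> k +
         (\<Sum>j<n. \<integral>\<omega>. indicator {\<omega>\<in>space M. enat j < \<tau> \<omega>} \<omega> * (Pf \<phi> (X j \<omega>) - \<phi> (X j \<omega>)) \<partial>M)"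
proof (induction n)
  case 0
  have "(\<integral>\<omega>. \<phi> (X (ti \<tau> 0 \<omega>) \<omega>) \<partial>M) = (\<integral>\<omega>. \<phi> k \<partial>M)"
  proof (rule integral_cong_AE)
    show "AE \<omega> in M. \<phi> (X (ti \<tau> 0 \<omega>) \<omega>) = \<phi> k"
      using AE_good by eventually_elim (simp add: ti_0 good_X0)
    show "(\<lambda>\<omega>. \<phi> (X (ti \<tau> 0 \<omega>) \<omega>)) \<in> borel_measurable M"
      using measurable_compose[OF stopX_meas[OF min_meas[OF tm]], of \<phi>] by simp
  qed simp
  then show ?case by (simp add: prob_space)
next
  case (Suc n)
  then show ?case using ost_step[OF tm tf] by simp
qed

definition pp :: "nat \<Rightarrow> real" where "pp n = (\<Prod>i<n. l (Suc i) / r (Suc i))"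
definition sf :: "nat \<Rightarrow> real" where "sf x = (\<Sum>j<x. pp j)"

lemma pp_pos: "pp n > 0"
  unfolding pp_def by (intro prod_pos) (auto intro!: divide_pos_pos lpos rpos)

lemma pp_Suc: "pp (Suc n) = pp n * (l (Suc n) / r (Suc n))"
  unfolding pp_def by simp

lemma sf_0[simp]: "sf 0 = 0" by (simp add: sf_def)
lemma sf_Suc: "sf (Suc x) = sf x + pp x" by (simp add: sf_def)

lemma sf_mono: "x \<le> y \<Longrightarrow> sf x \<le> sf y"
  unfolding sf_def by (rule sum_mono2) (auto intro: less_imp_le[OF pp_pos])

lemma sf_nonneg: "sf x \<ge> 0" using sf_mono[of 0 x] by simp

lemma rpp: "r (Suc y) * pp (Suc y) = l (Suc y) * pp y"
  using rpos[of "Suc y"] by (simp add: pp_Suc field_simps)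

lemma harm: "Pf sf x = sf x"
proof (cases x)
  case 0 then show ?thesis by (simp add: Pf_def)
next
  case (Suc y)
  have lr1: "l (Suc y) + r (Suc y) = 1" using lr[of "Suc y"] by simp
  have "Pf sf x = r (Suc y) * (sf y + pp y + pp (Suc y)) + l (Suc y) * sf y"
    by (simp add: Pf_def Suc sf_Suc)
  also have "\<dots> = (l (Suc y) + r (Suc y)) * sf y + r (Suc y) * pp y + r (Suc y) * pp (Suc y)"
    by (simp add: algebra_simps)
  also have "\<dots> = sf y + pp y"
  proof -
    have e: "l (Suc y) * pp y + r (Suc y) * pp y = pp y" by (metis lr1 distrib_right mult_1)
    show ?thesis by (simp only: lr1 mult_1) (use e rpp[of y] in linarith)
  qed
  finally show ?thesis by (simp add: Suc sf_Suc)
qed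

lemma sq_drift: "Pf (\<lambda>x. (sf x)\<^sup>2) (Suc y) - (sf (Suc y))\<^sup>2 = r (Suc y) * (pp (Suc y))\<^sup>2 + l (Suc y) * (pp y)\<^sup>2"
proof -
  define s a b R L where "s = sf (Suc y)" "a = pp (Suc y)" "b = pp y" "R = r (Suc y)" "L = l (Suc y)"
  have RL: "R + L = 1" using lr[of "Suc y"] by (simp add: s_a_b_R_L_def)
  have Ra: "R * a = L * b" using rpp[of y] by (simp add: s_a_b_R_L_def)
  have "Pf (\<lambda>x. (sf x)\<^sup>2) (Suc y) = R * (s + a)\<^sup>2 + L * (s - b)\<^sup>2"
    by (simp add: Pf_def s_a_b_R_L_def sf_Suc)
  also have "\<dots> = (R + L) * s\<^sup>2 + 2 * s * (R * a - L * b) + R * a\<^sup>2 + L * b\<^sup>2"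
    by (simp add: power2_eq_square algebra_simps)
  also have "\<dots> = s\<^sup>2 + R * a\<^sup>2 + L * b\<^sup>2" by (simp add: RL Ra)
  finally show ?thesis by (simp add: s_a_b_R_L_def)
qed

lemma sq_drift_ge: "x \<ge> 1 \<Longrightarrow> Pf (\<lambda>x. (sf x)\<^sup>2) x - (sf x)\<^sup>2 \<ge> r x * (pp x)\<^sup>2"
proof -
  assume "x \<ge> 1"
  then obtain y where y: "x = Suc y" by (cases x) auto
  have "l x * (pp y)\<^sup>2 \<ge> 0" using lpos[of x] y by simp
  then show ?thesis using sq_drift[of y] y by simp
qed

definition stt :: "('a \<Rightarrow> enat) \<Rightarrow> bool" where
  "stt \<tau> \<longleftrightarrow> (\<forall>n. {\<omega>\<in>space M. enat n < \<tau> \<omega>} \<in> nat_filtration M X n)"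

lemma stt_meas:
  assumes st: "stt \<tau>"
  shows "\<tau> \<in> M \<rightarrow>\<^sub>M count_space UNIV"
proof -
  have L: "{\<omega>\<in>space M. enat n < \<tau> \<omega>} \<in> sets M" for n
    using st filt_in unfolding stt_def by blast
  show ?thesis unfolding measurable_count_space_eq2_countable
  proof (intro conjI ballI)
    show "\<tau> \<in> space M \<rightarrow> UNIV" by simp
    fix a :: enat
    show "\<tau> -` {a} \<inter> space M \<in> sets M"
    proof (cases a)
      case (enat t)
      show ?thesis
      proof (cases t)
        case 0
        have "\<tau> -` {a} \<inter> space M = space M - {\<omega>\<in>space M. enat 0 < \<tau> \<omega>}"
          using enat 0 by (auto simp: zero_enat_def[symmetric])
        then show ?thesis using L by auto
      next
        case (Suc s)
        have "\<tau> -` {a} \<inter> space M = {\<omega>\<in>space M. enat s < \<tau> \<omega>} - {\<omega>\<in>space M. enat (Suc s) < \<tau> \<omega>}"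
        proof (intro set_eqI iffI)
          fix \<omega> assume "\<omega> \<in> \<tau> -` {a} \<inter> space M"
          then show "\<omega> \<in> {\<omega>\<in>space M. enat s < \<tau> \<omega>} - {\<omega>\<in>space M. enat (Suc s) < \<tau> \<omega>}"
            using enat Suc by auto
        next
          fix \<omega> assume w: "\<omega> \<in> {\<omega>\<in>space M. enat s < \<tau> \<omega>} - {\<omega>\<in>space M. enat (Suc s) < \<tau> \<omega>}"
          then show "\<omega> \<in> \<tau> -` {a} \<inter> space M"
            using enat Suc by (cases "\<tau> \<omega>") auto
        qed
        then show ?thesis using L by auto
      qed
    next
      case infinity
      have "\<tau> -` {a} \<inter> space M = (\<Inter>n. {\<omega>\<in>space M. enat n < \<tau> \<omega>})"
      proof (intro set_eqI iffI)
        fix \<omega> assume "\<omega> \<in> (\<Inter>n. {\<omega>\<in>space M. enat n < \<tau> \<omega>})"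
        then show "\<omega> \<in> \<tau> -` {a} \<inter> space M" using infinity by (cases "\<tau> \<omega>") auto
      qed (use infinity in auto)
      then show ?thesis using L by auto
    qed
  qed
qed

lemma stopping_stt: "is_stopping_time M X T \<Longrightarrow> stt T"
  unfolding stt_def is_stopping_time_def
proof (intro allI)
  fix n assume "\<forall>n. {\<omega> \<in> space M. T \<omega> \<le> enat n} \<in> nat_filtration M X n"
  then have "space M - {\<omega> \<in> space M. T \<omega> \<le> enat n} \<in> nat_filtration M X n"
    by (intro filt_compl) auto
  moreover have "space M - {\<omega> \<in> space M. T \<omega> \<le> enat n} = {\<omega>\<in>space M. enat n < T \<omega>}"
    by (auto simp: not_le)
  ultimately show "{\<omega>\<in>space M. enat n < T \<omega>} \<in> nat_filtration M X n" by simp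
qed

definition ex :: "nat \<Rightarrow> 'a \<Rightarrow> enat" where
  "ex N \<omega> = (if \<exists>j. X j \<omega> = 0 \<or> N \<le> X j \<omega> then enat (LEAST j. X j \<omega> = 0 \<or> N \<le> X j \<omega>) else \<infinity>)"

lemma ex_less: "enat n < ex N \<omega> \<longleftrightarrow> (\<forall>j\<le>n. X j \<omega> \<noteq> 0 \<and> X j \<omega> < N)"
proof (cases "\<exists>j. X j \<omega> = 0 \<or> N \<le> X j \<omega>")
  case True
  define t where "t = (LEAST j. X j \<omega> = 0 \<or> N \<le> X j \<omega>)"
  have t: "X t \<omega> = 0 \<or> N \<le> X t \<omega>" using LeastI_ex[OF True] by (simp add: t_def)
  have tl: "j < t \<Longrightarrow> X j \<omega> \<noteq> 0 \<and> X j \<omega> < N" for j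
    using not_less_Least[of j "\<lambda>j. X j \<omega> = 0 \<or> N \<le> X j \<omega>"] by (auto simp: t_def)
  have "ex N \<omega> = enat t" using True by (simp add: ex_def t_def)
  show ?thesis unfolding \<open>ex N \<omega> = enat t\<close>
  proof
    assume "enat n < enat t"
    then show "\<forall>j\<le>n. X j \<omega> \<noteq> 0 \<and> X j \<omega> < N" using tl by auto
  next
    assume a: "\<forall>j\<le>n. X j \<omega> \<noteq> 0 \<and> X j \<omega> < N"
    show "enat n < enat t"
    proof (rule ccontr)
      assume "\<not> enat n < enat t"
      then have "t \<le> n" by simp
      then show False using a t by auto
    qed
  qed
next
  case False
  have e: "ex N \<omega> = \<infinity>" by (simp only: ex_def if_not_P[OF False])
  show ?thesis using False by (simp add: e) (meson not_le)
qed

lemma ex_at: "ex N \<omega> = enat t \<Longrightarrow> X t \<omega> = 0 \<or> N \<le> X t \<omega>"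
proof -
  assume h: "ex N \<omega> = enat t"
  have c: "\<exists>j. X j \<omega> = 0 \<or> N \<le> X j \<omega>"
  proof (rule ccontr)
    assume "\<not> ?thesis"
    then have "ex N \<omega> = \<infinity>" unfolding ex_def by (simp del: not_ex)
    then show False using h by simp
  qed
  then have "t = (LEAST j. X j \<omega> = 0 \<or> N \<le> X j \<omega>)" using h by (simp add: ex_def)
  then show ?thesis using LeastI_ex[OF c] by simp
qed

lemma filt_sa: "sigma_algebra (space M) (nat_filtration M X n)"
  unfolding nat_filtration_def by (rule sigma_algebra_sigma_sets) auto

lemma stt_ex: "stt (ex N)"
  unfolding stt_def
proof
  fix n
  have "{\<omega>\<in>space M. enat n < ex N \<omega>} = (\<Inter>j\<in>{..n}. X j -` {x. x \<noteq> 0 \<and> x < N} \<inter> space M)"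
    by (auto simp: ex_less)
  also have "\<dots> \<in> nat_filtration M X n"
    apply (rule sigma_algebra.countable_INT[OF filt_sa])
    using filt_gen[of _ n "{x. x \<noteq> 0 \<and> x < N}"] by blast+
  finally show "{\<omega>\<in>space M. enat n < ex N \<omega>} \<in> nat_filtration M X n" .
qed

lemma pp_conv: "\<exists>L>0. pp \<longlonglongrightarrow> L"
proof -
  define \<rho> where "\<rho> i = l (Suc i) / r (Suc i)" for i
  have \<rho>pos: "\<rho> i > 0" for i unfolding \<rho>_def by (auto intro!: divide_pos_pos lpos rpos)
  have "summable (\<lambda>i. norm (\<rho> i - 1))"
    using summ by (simp add: \<rho>_def abs_minus_commute)
  then have "convergent_prod \<rho>"
    by (intro abs_convergent_prod_imp_convergent_prod summable_imp_abs_convergent_prod)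
  then obtain L where L: "(\<lambda>n. \<Prod>i\<le>n. \<rho> i) \<longlonglongrightarrow> L" "L \<noteq> 0"
    using convergent_prod_iff_nz_lim[of \<rho>] \<rho>pos by (metis less_irrefl)
  have "(\<lambda>n. \<Prod>i\<le>n. \<rho> i) = (\<lambda>n. pp (Suc n))"
    by (auto simp: pp_def \<rho>_def lessThan_Suc_atMost[symmetric])
  with L have "(\<lambda>n. pp (Suc n)) \<longlonglongrightarrow> L" by simp
  then have pl: "pp \<longlonglongrightarrow> L" by (rule LIMSEQ_imp_Suc)
  have "L \<ge> 0" by (rule LIMSEQ_le_const[OF pl]) (auto intro: less_imp_le[OF pp_pos])
  with L(2) have "L > 0" by simp
  with pl show ?thesis by blast
qed

definition Lc :: real where "Lc = lim pp"

lemma Lc: "pp \<longlonglongrightarrow> Lc" "Lc > 0"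
  using pp_conv limI unfolding Lc_def by blast+

lemma pp_bounds: "\<exists>c0 C. 0 < c0 \<and> (\<forall>n. c0 \<le> pp n \<and> pp n \<le> C)"
proof -
  obtain N0 where N0: "\<And>n. n \<ge> N0 \<Longrightarrow> pp n > Lc / 2"
    using order_tendstoD(1)[OF Lc(1), of "Lc/2"] Lc(2) by (auto simp: eventually_sequentially)
  obtain C where C: "\<And>n. norm (pp n) \<le> C"
    using Lc(1)[THEN convergentI, THEN convergent_imp_Bseq] unfolding Bseq_def by auto
  define c0 where "c0 = min (Lc/2) (Min (pp ` {..N0}))"
  have "c0 > 0" unfolding c0_def using Lc(2) pp_pos by (auto simp: Min_gr_iff)
  moreover have "c0 \<le> pp n" for n
  proof (cases "n \<le> N0")
    case True then show ?thesis unfolding c0_def by (auto intro!: min.coboundedI2 Min_le)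
  next
    case False then show ?thesis using N0[of n] unfolding c0_def by auto
  qed
  moreover have "pp n \<le> C" for n using C[of n] by auto
  ultimately show ?thesis by blast
qed

lemma sf_lower: assumes "\<And>n. c0 \<le> pp n" shows "c0 * x \<le> sf x"
proof (induction x)
  case (Suc x)
  have "c0 * Suc x = c0 * x + c0" by (simp add: algebra_simps)
  then show ?case using Suc.IH assms[of x] by (simp add: sf_Suc)
qed simp

lemma sf_upper: assumes "\<And>n. pp n \<le> C" shows "sf x \<le> C * x"
proof (induction x)
  case (Suc x)
  have "C * Suc x = C * x + C" by (simp add: algebra_simps)
  then show ?case using Suc.IH assms[of x] by (simp add: sf_Suc)
qed simp

lemma sf_asym:
  fixes \<epsilon> :: real
  assumes "\<epsilon> > 0"
  shows "\<exists>K. \<forall>x. \<bar>sf x - Lc * x\<bar> \<le> \<epsilon> * x + K"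
proof -
  obtain N0 where N0: "\<And>n. n \<ge> N0 \<Longrightarrow> \<bar>pp n - Lc\<bar> < \<epsilon>"
    using Lc(1)[unfolded LIMSEQ_def] assms by (auto simp: dist_real_def)
  define K where "K = (\<Sum>j<N0. \<bar>pp j - Lc\<bar>)"
  have K0: "K \<ge> 0" unfolding K_def by (simp add: sum_nonneg)
  have main: "(\<Sum>j<x. \<bar>pp j - Lc\<bar>) \<le> \<epsilon> * x + K" for x
  proof (induction x)
    case 0 then show ?case using K0 by simp
  next
    case (Suc x)
    show ?case
    proof (cases "x < N0")
      case True
      have "(\<Sum>j<Suc x. \<bar>pp j - Lc\<bar>) \<le> K"
        unfolding K_def by (rule sum_mono2) (use True in auto)
      moreover have "\<epsilon> * real (Suc x) \<ge> 0" using assms by simp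
      ultimately show ?thesis by linarith
    next
      case False
      then show ?thesis using Suc.IH N0[of x] by (simp add: algebra_simps)
    qed
  qed
  have "\<bar>sf x - Lc * x\<bar> \<le> \<epsilon> * x + K" for x
  proof -
    have "sf x - Lc * x = (\<Sum>j<x. pp j - Lc)" by (simp add: sf_def sum_subtractf)
    then have "\<bar>sf x - Lc * x\<bar> \<le> (\<Sum>j<x. \<bar>pp j - Lc\<bar>)" by (simp add: sum_abs)
    then show ?thesis using main[of x] by linarith
  qed
  then show ?thesis by blast
qed

lemma stt_sets: "stt \<tau> \<Longrightarrow> {\<omega>\<in>space M. enat n < \<tau> \<omega>} \<in> sets M"
  unfolding stt_def using filt_in by blast

lemma E_sf: "stt \<tau> \<Longrightarrow> (\<integral>\<omega>. sf (X (ti \<tau> n \<omega>) \<omega>) \<partial>M) = sf k"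
  using ost_iter[OF stt_meas, of \<tau> sf n] by (simp add: harm stt_def)

lemma ex_bound:
  assumes "k < N" "good \<omega>"
  shows "X (ti (ex N) n \<omega>) \<omega> \<le> N"
proof (cases "enat n < ex N \<omega>")
  case True
  then show ?thesis using ti_less[of n "ex N" \<omega>, OF True] ex_less[of n N \<omega>] by auto
next
  case False
  then obtain s where s: "ex N \<omega> = enat s" "s \<le> n" by (cases "ex N \<omega>") auto
  then have ts: "ti (ex N) n \<omega> = s" by (rule ti_ge)
  show ?thesis
  proof (cases s)
    case 0 then show ?thesis using ts good_X0[OF assms(2)] assms(1) by simp
  next
    case (Suc s')
    then have "enat s' < ex N \<omega>" using s by simp
    then have "X s' \<omega> < N" using ex_less[of s' N \<omega>] by auto
    then show ?thesis using ts Suc good_diff[OF assms(2), of s'] by simp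
  qed
qed

lemma rec_bound:
  assumes N: "k < N"
  shows "prob {\<omega>\<in>space M. \<forall>j. X j \<omega> \<noteq> 0} \<le> sf k / sf N"
proof -
  define \<sigma> where "\<sigma> = ex N"
  have st: "stt \<sigma>" unfolding \<sigma>_def by (rule stt_ex)
  have tm: "\<sigma> \<in> M \<rightarrow>\<^sub>M count_space UNIV" by (rule stt_meas[OF st])
  define Z where "Z = {\<omega>\<in>space M. \<forall>j. X j \<omega> \<noteq> 0}"
  define Q where "Q n = {\<omega>\<in>space M. enat n < \<sigma> \<omega>}" for n
  define B where "B n = {\<omega>\<in>space M. \<not> enat n < \<sigma> \<omega> \<and> (\<forall>j. X j \<omega> \<noteq> 0)}" for n
  have Zs[measurable]: "Z \<in> sets M" unfolding Z_def by measurable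
  have Qs[measurable]: "Q n \<in> sets M" for n unfolding Q_def by (rule stt_sets[OF st])
  have Bs[measurable]: "B n \<in> sets M" for n
  proof -
    have "B n = Z - Q n" by (auto simp: B_def Z_def Q_def)
    then show ?thesis by simp
  qed
  have N1: "N \<ge> 1" using N k by simp
  have sfN: "sf N > 0" using sf_mono[of 1 N] N1 pp_pos[of 0] by (simp add: sf_def)
  define \<delta> where "\<delta> = Min ((\<lambda>x. r x * (pp x)\<^sup>2) ` {1..N})"
  have \<delta>pos: "\<delta> > 0" unfolding \<delta>_def using N1
    by (subst Min_gr_iff) (auto intro!: mult_pos_pos rpos pp_pos simp: pp_pos[THEN less_imp_neq, symmetric])
  have \<delta>le: "\<delta> \<le> r x * (pp x)\<^sup>2" if "1 \<le> x" "x \<le> N" for x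
    unfolding \<delta>_def using that by (intro Min_le) auto
  define D where "D x = Pf (\<lambda>x. (sf x)\<^sup>2) x - (sf x)\<^sup>2" for x
  have bX: "AE \<omega> in M. X m \<omega> \<le> k + m" for m
    using AE_good by eventually_elim (rule good_bound)
  have m1: "(\<lambda>\<omega>. X (ti \<sigma> n \<omega>) \<omega>) \<in> M \<rightarrow>\<^sub>M count_space UNIV" for n
    by (rule stopX_meas[OF min_meas[OF tm]])
  have bT: "AE \<omega> in M. X (ti \<sigma> n \<omega>) \<omega> \<le> N" for n
    using AE_good by eventually_elim (use ex_bound[OF N] in \<open>simp add: \<sigma>_def\<close>)
  have Qbound: "\<delta> * n * prob (Q n) \<le> (sf N)\<^sup>2" for n
  proof -
    have eq: "(\<integral>\<omega>. (sf (X (ti \<sigma> n \<omega>) \<omega>))\<^sup>2 \<partial>M) = (sf k)\<^sup>2 +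
         (\<Sum>j<n. \<integral>\<omega>. indicator (Q j) \<omega> * D (X j \<omega>) \<partial>M)"
      using ost_iter[OF tm, of "\<lambda>x. (sf x)\<^sup>2" n] st by (simp add: stt_def Q_def D_def)
    have le1: "(\<integral>\<omega>. (sf (X (ti \<sigma> n \<omega>) \<omega>))\<^sup>2 \<partial>M) \<le> (\<integral>\<omega>. (sf N)\<^sup>2 \<partial>M)"
    proof (rule integral_mono_AE)
      show "integrable M (\<lambda>\<omega>. (sf (X (ti \<sigma> n \<omega>) \<omega>))\<^sup>2)"
        by (rule int_X[OF m1 bT])
      show "AE \<omega> in M. (sf (X (ti \<sigma> n \<omega>) \<omega>))\<^sup>2 \<le> (sf N)\<^sup>2"
        using bT[of n] by eventually_elim (auto intro!: power_mono sf_mono sf_nonneg)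
    qed simp
    have le2: "\<delta> * prob (Q j) \<le> (\<integral>\<omega>. indicator (Q j) \<omega> * D (X j \<omega>) \<partial>M)" for j
    proof -
      have "\<delta> * prob (Q j) = (\<integral>\<omega>. \<delta> * indicator (Q j) \<omega> \<partial>M)" by simp
      also have "\<dots> \<le> (\<integral>\<omega>. indicator (Q j) \<omega> * D (X j \<omega>) \<partial>M)"
      proof (rule integral_mono_AE)
        show "integrable M (\<lambda>\<omega>. \<delta> * indicator (Q j) \<omega>)" by (rule int_ci) simp
        show "integrable M (\<lambda>\<omega>. indicator (Q j) \<omega> * D (X j \<omega>))"
          using integrable_real_mult_indicator[OF Qs int_X[OF Xmeas bX, of D]] by (simp add: mult.commute)
        show "AE \<omega> in M. \<delta> * indicator (Q j) \<omega> \<le> indicator (Q j) \<omega> * D (X j \<omega>)"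
          using AE_good
        proof eventually_elim
          case (elim \<omega>)
          show ?case
          proof (cases "\<omega> \<in> Q j")
            case True
            then have "X j \<omega> \<noteq> 0 \<and> X j \<omega> < N" using ex_less[of j N \<omega>] by (auto simp: Q_def \<sigma>_def)
            then have "\<delta> \<le> D (X j \<omega>)" unfolding D_def
              using \<delta>le[of "X j \<omega>"] sq_drift_ge[of "X j \<omega>"] by auto
            then show ?thesis using True by simp
          qed simp
        qed
      qed
      finally show ?thesis .
    qed
    have le3: "prob (Q n) \<le> prob (Q j)" if "j < n" for j
    proof (rule finite_measure_mono)
      show "Q n \<subseteq> Q j" using that unfolding Q_def
        by (auto elim: less_trans[rotated])
    qed simp
    have "\<delta> * n * prob (Q n) = (\<Sum>j<n. \<delta> * prob (Q n))" by simp
    also have "\<dots> \<le> (\<Sum>j<n. \<delta> * prob (Q j))"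
      by (intro sum_mono mult_left_mono le3) (use \<delta>pos in auto)
    also have "\<dots> \<le> (\<Sum>j<n. \<integral>\<omega>. indicator (Q j) \<omega> * D (X j \<omega>) \<partial>M)"
      by (intro sum_mono le2)
    also have "\<dots> \<le> (sf N)\<^sup>2"
    proof -
      have le1': "(\<integral>\<omega>. (sf (X (ti \<sigma> n \<omega>) \<omega>))\<^sup>2 \<partial>M) \<le> (sf N)\<^sup>2" using le1 by (simp add: prob_space)
      show ?thesis using eq le1' zero_le_power2[of "sf k"] by linarith
    qed
    finally show ?thesis .
  qed
  have Bbound: "sf N * prob (B n) \<le> sf k" for n
  proof -
    have "sf N * prob (B n) = (\<integral>\<omega>. sf N * indicator (B n) \<omega> \<partial>M)" by simp
    also have "\<dots> \<le> (\<integral>\<omega>. sf (X (ti \<sigma> n \<omega>) \<omega>) \<partial>M)"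
    proof (rule integral_mono_AE)
      show "integrable M (\<lambda>\<omega>. sf N * indicator (B n) \<omega>)" by (rule int_ci) simp
      show "integrable M (\<lambda>\<omega>. sf (X (ti \<sigma> n \<omega>) \<omega>))"
        by (rule int_X[OF m1 bT])
      show "AE \<omega> in M. sf N * indicator (B n) \<omega> \<le> sf (X (ti \<sigma> n \<omega>) \<omega>)"
        using AE_good
      proof eventually_elim
        case (elim \<omega>)
        show ?case
        proof (cases "\<omega> \<in> B n")
          case True
          then obtain s where s: "\<sigma> \<omega> = enat s" "s \<le> n"
            by (cases "\<sigma> \<omega>") (auto simp: B_def)
          then have ts: "ti \<sigma> n \<omega> = s" by (rule ti_ge)
          have "X s \<omega> = 0 \<or> N \<le> X s \<omega>" using ex_at[of N \<omega> s] s by (simp add: \<sigma>_def)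
          moreover have "X s \<omega> \<noteq> 0" using True by (simp add: B_def)
          ultimately have "N \<le> X s \<omega>" by simp
          then show ?thesis using True ts by (simp add: sf_mono)
        qed (simp add: sf_nonneg)
      qed
    qed
    also have "\<dots> = sf k" using E_sf[OF st] .
    finally show ?thesis .
  qed
  have ZB: "prob Z \<le> prob (B n) + prob (Q n)" for n
  proof -
    have "Z \<subseteq> B n \<union> Q n" by (auto simp: Z_def B_def Q_def)
    then have "prob Z \<le> prob (B n \<union> Q n)" by (intro finite_measure_mono) auto
    also have "\<dots> \<le> prob (B n) + prob (Q n)" by (rule measure_Un_le) auto
    finally show ?thesis .
  qed
  have PB: "prob (B n) \<le> sf k / sf N" for n
    using Bbound[of n] sfN by (simp add: field_simps mult.commute)
  have PQ: "prob (Q n) \<le> (sf N)\<^sup>2 / (\<delta> * n)" if "n > 0" for n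
    using Qbound[of n] \<delta>pos that by (simp add: field_simps)
  show ?thesis unfolding Z_def[symmetric]
  proof (rule ccontr)
    assume "\<not> prob Z \<le> sf k / sf N"
    then have gap: "prob Z - sf k / sf N > 0" by simp
    obtain n :: nat where n: "n > (sf N)\<^sup>2 / (\<delta> * (prob Z - sf k / sf N))"
      using reals_Archimedean2 by blast
    have npos: "n > 0"
    proof -
      have "(sf N)\<^sup>2 / (\<delta> * (prob Z - sf k / sf N)) \<ge> 0" using gap \<delta>pos by simp
      then show ?thesis using n by (cases n) auto
    qed
    define g where "g = prob Z - sf k / sf N"
    have dg: "\<delta> * g > 0" using gap \<delta>pos by (simp add: g_def)
    have dn: "\<delta> * n > 0" using \<delta>pos npos by simp
    have "(sf N)\<^sup>2 < n * (\<delta> * g)" using n dg by (simp add: g_def pos_divide_less_eq)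
    then have "(sf N)\<^sup>2 < g * (\<delta> * n)" by (simp add: mult_ac)
    then have "(sf N)\<^sup>2 / (\<delta> * n) < g" using dn by (simp add: pos_divide_less_eq)
    then have "(sf N)\<^sup>2 / (\<delta> * n) < prob Z - sf k / sf N" by (simp add: g_def)
    then show False using ZB[of n] PB[of n] PQ[OF npos] by linarith
  qed
qed

lemma recurrent: "AE \<omega> in M. \<exists>j. X j \<omega> = 0"
proof -
  define Z where "Z = {\<omega>\<in>space M. \<forall>j. X j \<omega> \<noteq> 0}"
  have Zs[measurable]: "Z \<in> sets M" unfolding Z_def by measurable
  obtain c0 C where c0: "0 < c0" "\<And>n. c0 \<le> pp n" using pp_bounds by blast
  have "prob Z \<le> sf k / (c0 * N)" if "k < N" for N
  proof -
    have "prob Z \<le> sf k / sf N" using rec_bound[OF that] by (simp add: Z_def)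
    also have "\<dots> \<le> sf k / (c0 * N)"
    proof -
      have p1: "c0 * N > 0" using that c0(1) k by simp
      then have p2: "sf N > 0" using sf_lower[OF c0(2), of N] by linarith
      show ?thesis using p1 p2 sf_lower[OF c0(2), of N] sf_nonneg[of k]
        by (intro divide_left_mono) auto
    qed
    finally show ?thesis .
  qed
  have "prob Z = 0"
  proof (rule ccontr)
    assume "prob Z \<noteq> 0"
    then have pz: "prob Z > 0" using measure_nonneg[of M Z] by linarith
    obtain N :: nat where N: "N > max k (sf k / (c0 * prob Z))"
      using reals_Archimedean2 by blast
    have "prob Z \<le> sf k / (c0 * N)" using N \<open>k < N \<Longrightarrow> _\<close> by (simp add: \<open>\<And>N. k < N \<Longrightarrow> prob Z \<le> sf k / (c0 * real N)\<close>)
    moreover have "sf k / (c0 * N) < prob Z"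
      using N pz c0(1) by (simp add: field_simps)
    ultimately show False by simp
  qed
  then show ?thesis
    by (intro AE_I'[of Z]) (auto simp: Z_def emeasure_eq_measure intro!: null_setsI)
qed

definition tr :: "('a \<Rightarrow> enat) \<Rightarrow> 'a \<Rightarrow> real" where
  "tr \<tau> \<omega> = (case \<tau> \<omega> of enat t \<Rightarrow> real t | \<infinity> \<Rightarrow> 0)"

lemma tr_int:
  assumes tm: "\<tau> \<in> M \<rightarrow>\<^sub>M count_space UNIV" and fin: "(\<integral>\<^sup>+\<omega>. ennreal_of_enat (\<tau> \<omega>) \<partial>M) < \<infinity>"
  shows "integrable M (tr \<tau>)" "AE \<omega> in M. \<tau> \<omega> \<noteq> \<infinity>"
proof -
  have m: "tr \<tau> \<in> borel_measurable M"
    using measurable_compose[OF tm, of "\<lambda>t. case t of enat t \<Rightarrow> real t | \<infinity> \<Rightarrow> 0" borel]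
    by (simp add: tr_def[abs_def])
  have m2: "(\<lambda>\<omega>. ennreal_of_enat (\<tau> \<omega>)) \<in> borel_measurable M"
    using measurable_compose[OF tm, of ennreal_of_enat borel] by simp
  have "(\<integral>\<^sup>+\<omega>. ennreal (norm (tr \<tau> \<omega>)) \<partial>M) \<le> (\<integral>\<^sup>+\<omega>. ennreal_of_enat (\<tau> \<omega>) \<partial>M)"
    by (intro nn_integral_mono) (auto simp: tr_def ennreal_of_nat_eq_real_of_nat split: enat.splits)
  then show "integrable M (tr \<tau>)" using fin by (intro integrableI_bounded m) auto
  have "AE \<omega> in M. ennreal_of_enat (\<tau> \<omega>) \<noteq> \<infinity>"
    by (rule nn_integral_PInf_AE[OF m2]) (use fin in auto)
  then show "AE \<omega> in M. \<tau> \<omega> \<noteq> \<infinity>"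
  proof eventually_elim
    case (elim \<omega>) then show ?case by (cases "\<tau> \<omega>") auto
  qed
qed

lemma sv_meas:
  assumes tm: "\<tau> \<in> M \<rightarrow>\<^sub>M count_space UNIV"
  shows "(\<lambda>\<omega>. stopped_value X \<tau> \<omega>) \<in> M \<rightarrow>\<^sub>M count_space UNIV"
proof -
  have "(\<lambda>\<omega>. (\<lambda>t \<omega>. case t of enat n \<Rightarrow> X n \<omega> | \<infinity> \<Rightarrow> 0) (\<tau> \<omega>) \<omega>) \<in> M \<rightarrow>\<^sub>M count_space UNIV"
    apply (rule measurable_compose_countable'[where I=UNIV])
    subgoal for t by (cases t) auto
    using tm by auto
  then show ?thesis by (simp add: stopped_value_def)
qed

lemma stop_E:
  assumes st: "stt \<tau>" and fin: "AE \<omega> in M. \<tau> \<omega> \<noteq> \<infinity>" and tri: "integrable M (tr \<tau>)"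
  shows "integrable M (\<lambda>\<omega>. sf (stopped_value X \<tau> \<omega>))"
    "(\<integral>\<omega>. sf (stopped_value X \<tau> \<omega>) \<partial>M) = sf k"
proof -
  have tm: "\<tau> \<in> M \<rightarrow>\<^sub>M count_space UNIV" by (rule stt_meas[OF st])
  obtain c0 C where cC: "0 < c0" "\<And>n. c0 \<le> pp n \<and> pp n \<le> C" using pp_bounds by blast
  have C0: "C \<ge> 0" using cC(1) cC(2)[of 0] by linarith
  define w where "w \<omega> = C * (k + tr \<tau> \<omega>)" for \<omega>
  have wi: "integrable M w" unfolding w_def using tri by (intro integrable_mult_right Bochner_Integration.integrable_add) auto
  have sm: "(\<lambda>\<omega>. sf (stopped_value X \<tau> \<omega>)) \<in> borel_measurable M"
    using measurable_compose[OF sv_meas[OF tm], of sf] by simp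
  have Ym: "(\<lambda>\<omega>. sf (X (ti \<tau> n \<omega>) \<omega>)) \<in> borel_measurable M" for n
    using measurable_compose[OF stopX_meas[OF min_meas[OF tm]], of sf] by simp
  have lim: "AE \<omega> in M. (\<lambda>n. sf (X (ti \<tau> n \<omega>) \<omega>)) \<longlonglongrightarrow> sf (stopped_value X \<tau> \<omega>)"
    using fin
  proof eventually_elim
    case (elim \<omega>)
    then obtain t where t: "\<tau> \<omega> = enat t" by auto
    have "eventually (\<lambda>n. sf (X (ti \<tau> n \<omega>) \<omega>) = sf (stopped_value X \<tau> \<omega>)) sequentially"
      unfolding eventually_sequentially
      by (intro exI[of _ t] allI impI) (simp add: ti_ge[of \<tau> \<omega> t, OF t] stopped_value_def t)
    then show ?case by (rule tendsto_eventually)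
  qed
  have bnd: "AE \<omega> in M. norm (sf (X (ti \<tau> n \<omega>) \<omega>)) \<le> w \<omega>" for n
    using fin AE_good
  proof eventually_elim
    case (elim \<omega>)
    then obtain t where t: "\<tau> \<omega> = enat t" by auto
    have "ti \<tau> n \<omega> \<le> t" using t by (simp add: ti_def min_def)
    then have "X (ti \<tau> n \<omega>) \<omega> \<le> k + t" using good_bound[OF elim(2), of "ti \<tau> n \<omega>"] by simp
    then have "real (X (ti \<tau> n \<omega>) \<omega>) \<le> k + real t" by linarith
    then have "C * X (ti \<tau> n \<omega>) \<omega> \<le> C * (k + real t)" using C0 by (intro mult_left_mono) auto
    moreover have "sf (X (ti \<tau> n \<omega>) \<omega>) \<le> C * X (ti \<tau> n \<omega>) \<omega>" using sf_upper cC by blast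
    ultimately show ?case using sf_nonneg by (simp add: w_def tr_def t)
  qed
  show "integrable M (\<lambda>\<omega>. sf (stopped_value X \<tau> \<omega>))"
    by (rule integrable_dominated_convergence[OF sm Ym wi lim bnd])
  have "(\<lambda>n. \<integral>\<omega>. sf (X (ti \<tau> n \<omega>) \<omega>) \<partial>M) \<longlonglongrightarrow> (\<integral>\<omega>. sf (stopped_value X \<tau> \<omega>) \<partial>M)"
    by (rule integral_dominated_convergence[OF sm Ym wi lim bnd])
  moreover have "(\<lambda>n. \<integral>\<omega>. sf (X (ti \<tau> n \<omega>) \<omega>) \<partial>M) = (\<lambda>n. sf k)"
    using E_sf[OF st] by simp
  ultimately show "(\<integral>\<omega>. sf (stopped_value X \<tau> \<omega>) \<partial>M) = sf k"
    using LIMSEQ_unique tendsto_const by metis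
qed

lemma final:
  fixes T :: "nat \<Rightarrow> 'a \<Rightarrow> enat"
  assumes stop: "\<And>m. is_stopping_time M X (T m)"
    and finE: "\<And>m. (\<integral>\<^sup>+ \<omega>. ennreal_of_enat (T m \<omega>) \<partial>M) < \<infinity>"
    and conv: "AE \<omega> in M. (\<lambda>m. T m \<omega>) \<longlonglongrightarrow> hitting_time_0 X \<omega>"
  shows "\<exists>L::ennreal. 0 < L \<and> L < \<infinity> \<and>
           (\<lambda>m. \<integral>\<^sup>+ \<omega>. of_nat (stopped_value X (T m) \<omega>) \<partial>M) \<longlonglongrightarrow> L"
proof -
  have st: "stt (T m)" for m by (rule stopping_stt[OF stop])
  have tm: "T m \<in> M \<rightarrow>\<^sub>M count_space UNIV" for m by (rule stt_meas[OF st])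
  have fin: "AE \<omega> in M. T m \<omega> \<noteq> \<infinity>" for m by (rule tr_int(2)[OF tm finE])
  have tri: "integrable M (tr (T m))" for m by (rule tr_int(1)[OF tm finE])
  define S where "S m \<omega> = stopped_value X (T m) \<omega>" for m \<omega>
  have Sm: "S m \<in> M \<rightarrow>\<^sub>M count_space UNIV" for m
    unfolding S_def[abs_def] by (rule sv_meas[OF tm])
  have Sms[measurable]: "{\<omega>\<in>space M. S m \<omega> \<noteq> 0} \<in> sets M" for m
    using measurable_sets[OF Sm, of "{x. x \<noteq> 0}"] by (simp add: vimage_def Int_def conj_commute)
  have Sbm[measurable]: "(\<lambda>\<omega>. real (S m \<omega>)) \<in> borel_measurable M" for m
    using measurable_compose[OF Sm, of real] by simp
  have I1: "integrable M (\<lambda>\<omega>. sf (S m \<omega>))" for m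
    unfolding S_def by (rule stop_E(1)[OF st fin tri])
  have E1: "(\<integral>\<omega>. sf (S m \<omega>) \<partial>M) = sf k" for m
    unfolding S_def by (rule stop_E(2)[OF st fin tri])
  obtain c0 C where cC: "0 < c0" "\<And>n. c0 \<le> pp n" using pp_bounds by blast
  have low: "c0 * x \<le> sf x" for x by (rule sf_lower[OF cC(2)])
  have IS: "integrable M (\<lambda>\<omega>. real (S m \<omega>))" for m
  proof (rule Bochner_Integration.integrable_bound)
    show "integrable M (\<lambda>\<omega>. (1/c0) * sf (S m \<omega>))" using I1 by simp
    show "AE \<omega> in M. norm (real (S m \<omega>)) \<le> norm ((1/c0) * sf (S m \<omega>))"
      using low[of "S m _"] cC(1) sf_nonneg by (auto simp: field_simps)
  qed simp
  define a where "a m = (\<integral>\<omega>. real (S m \<omega>) \<partial>M)" for m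
  have a0: "a m \<ge> 0" for m unfolding a_def by simp
  have abound: "a m \<le> sf k / c0" for m
  proof -
    have "a m \<le> (\<integral>\<omega>. (1/c0) * sf (S m \<omega>) \<partial>M)" unfolding a_def
      using low[of "S m _"] cC(1) by (intro integral_mono IS) (auto simp: field_simps intro: I1)
    also have "\<dots> = sf k / c0" using E1 by simp
    finally show ?thesis .
  qed
  define P where "P m = prob {\<omega>\<in>space M. S m \<omega> \<noteq> 0}" for m
  have P0: "P \<longlonglongrightarrow> 0"
  proof -
    have "(\<lambda>m. \<integral>\<omega>. indicator {\<omega>\<in>space M. S m \<omega> \<noteq> 0} \<omega> \<partial>M) \<longlonglongrightarrow> (\<integral>\<omega>. (0::real) \<partial>M)"
    proof (rule integral_dominated_convergence[where w="\<lambda>_. 1"])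
      have finall: "AE \<omega> in M. \<forall>m. T m \<omega> \<noteq> \<infinity>" using fin by (simp add: AE_all_countable)
      show "AE \<omega> in M. (\<lambda>m. indicator {\<omega>\<in>space M. S m \<omega> \<noteq> 0} \<omega>) \<longlonglongrightarrow> (0::real)"
        using conv recurrent AE_good finall
      proof eventually_elim
        case (elim \<omega>)
        note el = elim
        define t0 where "t0 = (LEAST n. X n \<omega> = 0)"
        have h: "hitting_time_0 X \<omega> = enat t0" using elim(2) by (simp add: hitting_time_0_def t0_def)
        have Xt0: "X t0 \<omega> = 0" unfolding t0_def using elim(2) by (rule LeastI_ex)
        have ev: "eventually (\<lambda>m. enat t0 \<le> T m \<omega>) sequentially"
        proof (cases t0)
          case 0 then show ?thesis by (simp add: zero_enat_def[symmetric])
        next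
          case (Suc t1)
          have "eventually (\<lambda>m. enat t1 < T m \<omega>) sequentially"
            using order_tendstoD(1)[OF elim(1)[unfolded h], of "enat t1"] Suc by simp
          then show ?thesis by eventually_elim (simp add: Suc Suc_ile_eq)
        qed
        have "eventually (\<lambda>m. indicator {\<omega>\<in>space M. S m \<omega> \<noteq> 0} \<omega> = (0::real)) sequentially"
          using ev
        proof eventually_elim
          case (elim m)
          obtain s where s: "T m \<omega> = enat s" using el(4)[rule_format, of m] by (cases "T m \<omega>") auto
          then have "t0 \<le> s" using elim by simp
          then have "X s \<omega> = 0" using good_absorb[OF el(3) Xt0] by simp
          then show ?case by (simp add: S_def stopped_value_def s)
        qed
        then show ?case by (rule tendsto_eventually)
      qed
      fix m
      show "indicator {\<omega>\<in>space M. S m \<omega> \<noteq> 0} \<in> borel_measurable M"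
        using Sms[of m] by (intro borel_measurable_indicator)
    qed auto
    moreover have "{\<omega> \<in> space M. 0 < S m \<omega>} \<inter> space M = {\<omega>\<in>space M. S m \<omega> \<noteq> 0}" for m by auto
    ultimately show ?thesis by (simp add: P_def[abs_def])
  qed
  have Lc0: "Lc > 0" by (rule Lc(2))
  have sfk: "sf k > 0" using low[of k] cC(1) k by (smt (verit) of_nat_0_less_iff mult_pos_pos not_one_le_zero le_0_eq of_nat_le_0_iff)
  have key: "\<bar>Lc * a m - sf k\<bar> \<le> \<epsilon> * a m + K * P m" if K: "\<forall>x. \<bar>sf x - Lc * x\<bar> \<le> \<epsilon> * x + K" for m \<epsilon> K
  proof -
    have pw: "\<bar>Lc * real x - sf x\<bar> \<le> \<epsilon> * real x + K * indicator {y. y \<noteq> 0} x" for x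
      using K[rule_format, of x] by (cases "x = 0") (auto simp: abs_minus_commute)
    have "Lc * a m - sf k = (\<integral>\<omega>. Lc * real (S m \<omega>) - sf (S m \<omega>) \<partial>M)"
      unfolding a_def using IS I1 E1 by simp
    then have "\<bar>Lc * a m - sf k\<bar> \<le> (\<integral>\<omega>. norm (Lc * real (S m \<omega>) - sf (S m \<omega>)) \<partial>M)"
      by (metis integral_norm_bound real_norm_def)
    also have "\<dots> \<le> (\<integral>\<omega>. \<epsilon> * real (S m \<omega>) + K * indicator {\<omega>\<in>space M. S m \<omega> \<noteq> 0} \<omega> \<partial>M)"
    proof (rule integral_mono)
      show "integrable M (\<lambda>\<omega>. norm (Lc * real (S m \<omega>) - sf (S m \<omega>)))"
        using IS I1 by (intro integrable_norm) simp
      show "integrable M (\<lambda>\<omega>. \<epsilon> * real (S m \<omega>) + K * indicator {\<omega>\<in>space M. S m \<omega> \<noteq> 0} \<omega>)"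
        using IS by (intro Bochner_Integration.integrable_add int_ci Sms) simp
      fix \<omega> assume "\<omega> \<in> space M"
      then show "norm (Lc * real (S m \<omega>) - sf (S m \<omega>)) \<le> \<epsilon> * real (S m \<omega>) + K * indicator {\<omega>\<in>space M. S m \<omega> \<noteq> 0} \<omega>"
        using pw[of "S m \<omega>"] by (simp add: indicator_def)
    qed
    also have "\<dots> = \<epsilon> * a m + K * P m"
    proof -
      define A where "A = {\<omega>\<in>space M. S m \<omega> \<noteq> 0}"
      have As: "A \<in> sets M" unfolding A_def by (rule Sms)
      have "(\<integral>\<omega>. \<epsilon> * real (S m \<omega>) + K * indicator A \<omega> \<partial>M) =
            (\<integral>\<omega>. \<epsilon> * real (S m \<omega>) \<partial>M) + (\<integral>\<omega>. K * indicator A \<omega> \<partial>M)"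
        by (rule Bochner_Integration.integral_add) (use IS[of m] int_ci[OF As] in auto)
      also have "\<dots> = \<epsilon> * a m + K * P m"
        unfolding a_def P_def A_def[symmetric] using int_ci_eq[OF As, of K] by simp
      finally show ?thesis unfolding A_def .
    qed
    finally show ?thesis .
  qed
  have lim: "a \<longlonglongrightarrow> sf k / Lc"
  proof (rule LIMSEQ_I)
    fix r :: real assume r: "r > 0"
    define \<epsilon> where "\<epsilon> = r * Lc * c0 / (2 * (sf k + 1))"
    have \<epsilon>: "\<epsilon> > 0" unfolding \<epsilon>_def using r Lc0 cC(1) sfk by simp
    obtain K where K: "\<forall>x. \<bar>sf x - Lc * x\<bar> \<le> \<epsilon> * x + K" using sf_asym[OF \<epsilon>] by blast
    have K0: "K \<ge> 0" using K[rule_format, of 0] by simp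
    have "(\<lambda>m. K * P m) \<longlonglongrightarrow> K * 0" by (intro tendsto_mult tendsto_const P0)
    then obtain no where no: "\<And>m. m \<ge> no \<Longrightarrow> \<bar>K * P m\<bar> < r * Lc / 2"
      using LIMSEQ_D[of "\<lambda>m. K * P m" 0 "r * Lc / 2"] r Lc0 by auto
    have "\<bar>a m - sf k / Lc\<bar> < r" if m: "m \<ge> no" for m
    proof -
      have "\<epsilon> * a m \<le> \<epsilon> * (sf k / c0)" using abound \<epsilon> by (intro mult_left_mono) auto
      also have "\<dots> = r * Lc * (sf k / (2 * (sf k + 1)))" unfolding \<epsilon>_def using cC(1) by (simp add: field_simps)
      also have "\<dots> < r * Lc * (1/2)"
        using r Lc0 sfk by (intro mult_strict_left_mono) (auto simp: field_simps)
      finally have e1: "\<epsilon> * a m < r * Lc / 2" by simp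
      have "\<bar>Lc * a m - sf k\<bar> < r * Lc" using key[OF K, of m] e1 no[OF m] by linarith
      moreover have "\<bar>Lc * a m - sf k\<bar> = Lc * \<bar>a m - sf k / Lc\<bar>"
      proof -
        have "Lc * a m - sf k = Lc * (a m - sf k / Lc)" using Lc0 by (simp add: right_diff_distrib)
        then show ?thesis using Lc0 by (simp add: abs_mult)
      qed
      ultimately show ?thesis using Lc0 by (simp add: mult.commute)
    qed
    then show "\<exists>no. \<forall>m\<ge>no. norm (a m - sf k / Lc) < r" by auto
  qed
  have nn: "(\<integral>\<^sup>+ \<omega>. of_nat (stopped_value X (T m) \<omega>) \<partial>M) = ennreal (a m)" for m
  proof -
    have "(\<integral>\<^sup>+ \<omega>. of_nat (stopped_value X (T m) \<omega>) \<partial>M) = (\<integral>\<^sup>+ \<omega>. ennreal (real (S m \<omega>)) \<partial>M)"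
      by (simp add: S_def ennreal_of_nat_eq_real_of_nat)
    also have "\<dots> = ennreal (a m)" unfolding a_def
      by (rule nn_integral_eq_integral[OF IS]) simp
    finally show ?thesis .
  qed
  show ?thesis
  proof (intro exI conjI)
    show "0 < ennreal (sf k / Lc)" using sfk Lc0 by simp
    show "ennreal (sf k / Lc) < \<infinity>" by simp
    show "(\<lambda>m. \<integral>\<^sup>+ \<omega>. of_nat (stopped_value X (T m) \<omega>) \<partial>M) \<longlonglongrightarrow> ennreal (sf k / Lc)"
      unfolding nn by (rule tendsto_ennrealI[OF lim])
  qed
qed

end

theorem proposition1:
  fixes M :: "'a measure" and l r :: "nat \<Rightarrow> real" and k :: nat
    and X :: "nat \<Rightarrow> 'a \<Rightarrow> nat" and T :: "nat \<Rightarrow> 'a \<Rightarrow> enat"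
  assumes lpos: "\<And>n. n \<ge> 1 \<Longrightarrow> l n > 0"
    and rpos: "\<And>n. n \<ge> 1 \<Longrightarrow> r n > 0"
    and lr: "\<And>n. n \<ge> 1 \<Longrightarrow> l n + r n = 1"
    and k: "k \<ge> 1"
    and chain: "birth_death_chain M l r k X"
    and summ: "summable (\<lambda>n. \<bar>1 - l (Suc n) / r (Suc n)\<bar>)"
    and stop: "\<And>m. is_stopping_time M X (T m)"
    and mono: "\<And>m \<omega>. \<omega> \<in> space M \<Longrightarrow> T m \<omega> \<le> T (Suc m) \<omega>"
    and finE: "\<And>m. (\<integral>\<^sup>+ \<omega>. ennreal_of_enat (T m \<omega>) \<partial>M) < \<infinity>"
    and conv: "AE \<omega> in M. (\<lambda>m. T m \<omega>) \<longlonglongrightarrow> hitting_time_0 X \<omega>"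
  shows "\<exists>L::ennreal. 0 < L \<and> L < \<infinity> \<and>
           (\<lambda>m. \<integral>\<^sup>+ \<omega>. of_nat (stopped_value X (T m) \<omega>) \<partial>M) \<longlonglongrightarrow> L"
proof -
  interpret bdc M l r k X
    by unfold_locales (use lpos rpos lr k chain summ in auto)
  show ?thesis by (rule final[OF stop finE conv])
qed

end
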